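(* For unknown single-minded bidders in a multi-unit auction with $m$ identical items, the following randomized mechanism obtains a $400$-approximation to the optimal social welfare (its expected welfare under truthful play is at least $\mathrm{OPT}/400$ on every instance). With probability $1/2$, run an ascending-price auction on the grand bundle of all $m$ items. With the remaining probability $1/2$: place each bidder independently in a set $S$ with probability $1/2$ and in $U$ otherwise; bidders in $S$ receive nothing and report their valuations; compute the optimal welfare $O$ achievable by allocating the items among bidders of $S$ only; then iterate over the bidders of $U$ in an arbitrary order, and let each purchase her preferred number of the remaining items at price $O/(10m)$ per item.
   Context: Bidder $i$ is single-minded: there are private $x_i\ge0$ and $d_i\in\{1,\dots,m\}$ with $v_i(q)=x_i$ if $q\ge d_i$ and $v_i(q)=0$ otherwise; utilities are quasi-linear. $\mathrm{OPT}$ is the maximum of $\sum_iv_i(q_i)$ over nonnegative integers with $\sum_iq_i\le m$. In the ascending auction on the grand bundle, the highest-value bidder wins all items. The expectation is over the mechanism's randomness. *)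

theory Defs
  imports Complex_Main
begin

text \<open>Bidders are indexed by 0..<n. Bidder i is single-minded with value x i and demand d i:
  her value for q items is x i if q >= d i and 0 otherwise.\<close>

definition val :: "(nat \<Rightarrow> real) \<Rightarrow> (nat \<Rightarrow> nat) \<Rightarrow> nat \<Rightarrow> nat \<Rightarrow> real" where
  "val x d i q = (if d i \<le> q then x i else 0)"

definition opt_on :: "(nat \<Rightarrow> real) \<Rightarrow> (nat \<Rightarrow> nat) \<Rightarrow> nat \<Rightarrow> nat set \<Rightarrow> real" where
  "opt_on x d m A = Max {(\<Sum>i\<in>A. val x d i (q i)) | q :: nat \<Rightarrow> nat. sum q A \<le> m}"

text \<open>Welfare of the ascending auction on the grand bundle: the highest-value bidder
  wins all m items.\<close>
definition grand_bundle_welfare :: "(nat \<Rightarrow> real) \<Rightarrow> (nat \<Rightarrow> nat) \<Rightarrow> nat \<Rightarrow> nat \<Rightarrow> real" where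
  "grand_bundle_welfare x d m n = Max (insert 0 ((\<lambda>i. val x d i m) ` {..<n}))"

fun seq_welfare :: "(nat \<Rightarrow> real) \<Rightarrow> (nat \<Rightarrow> nat) \<Rightarrow> (nat \<Rightarrow> nat \<Rightarrow> nat) \<Rightarrow> nat list \<Rightarrow> nat \<Rightarrow> real" where
  "seq_welfare x d ch [] r = 0"
| "seq_welfare x d ch (i # is) r = val x d i (ch i r) + seq_welfare x d ch is (r - ch i r)"

definition price :: "(nat \<Rightarrow> real) \<Rightarrow> (nat \<Rightarrow> nat) \<Rightarrow> nat \<Rightarrow> nat set \<Rightarrow> real" where
  "price x d m S = opt_on x d m S / (10 * real m)"

definition preferred_choice :: "(nat \<Rightarrow> real) \<Rightarrow> (nat \<Rightarrow> nat) \<Rightarrow> nat \<Rightarrow> real \<Rightarrow> (nat \<Rightarrow> nat \<Rightarrow> nat) \<Rightarrow> bool" where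
  "preferred_choice x d n p ch \<longleftrightarrow>
     (\<forall>i<n. \<forall>r. ch i r \<le> r \<and>
        (\<forall>q\<le>r. val x d i q - p * real q \<le> val x d i (ch i r) - p * real (ch i r)))"

text \<open>Expected welfare: w.p. 1/2 grand bundle; w.p. 1/2 a uniformly random sample set
  S (each bidder independently w.p. 1/2), then sequential posted prices to U = rest in
  order ord S, with purchase rule ch S.\<close>
definition expected_welfare ::
  "(nat \<Rightarrow> real) \<Rightarrow> (nat \<Rightarrow> nat) \<Rightarrow> nat \<Rightarrow> nat \<Rightarrow> (nat set \<Rightarrow> nat list) \<Rightarrow> (nat set \<Rightarrow> nat \<Rightarrow> nat \<Rightarrow> nat) \<Rightarrow> real" where
  "expected_welfare x d m n ord ch =
     (1/2) * grand_bundle_welfare x d m n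
   + (1/2) * (\<Sum>S\<in>Pow {..<n}. (1/2) ^ n * seq_welfare x d (ch S) (ord S) m)"

end

theory Submission imports Defs begin

lemma val_ge0: "0 \<le> x i \<Longrightarrow> 0 \<le> val x d i q"
  by (simp add: val_def)

lemma opt_set_sub:
  assumes "finite A"
  shows "{(\<Sum>i\<in>A. val x d i (q i)) | q :: nat \<Rightarrow> nat. sum q A \<le> m} \<subseteq> (\<lambda>B. sum x B) ` Pow A"
proof
  fix v assume "v \<in> {(\<Sum>i\<in>A. val x d i (q i)) | q :: nat \<Rightarrow> nat. sum q A \<le> m}"
  then obtain q where v: "v = (\<Sum>i\<in>A. val x d i (q i))" by blast
  have "v = sum x {i\<in>A. d i \<le> q i}"
    unfolding v using assms by (simp add: sum.inter_filter val_def)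
  then show "v \<in> (\<lambda>B. sum x B) ` Pow A" by blast
qed

lemma opt_fin:
  assumes "finite A"
  shows "finite {(\<Sum>i\<in>A. val x d i (q i)) | q :: nat \<Rightarrow> nat. sum q A \<le> m}"
  using opt_set_sub[OF assms] assms by (meson finite_Pow_iff finite_imageI finite_subset)

lemma opt_ge:
  assumes "finite A" "sum q A \<le> m"
  shows "(\<Sum>i\<in>A. val x d i (q i)) \<le> opt_on x d m A"
  unfolding opt_on_def using assms opt_fin[OF assms(1)] by (intro Max_ge) auto

lemma opt_att:
  assumes "finite A"
  shows "\<exists>q. sum q A \<le> m \<and> opt_on x d m A = (\<Sum>i\<in>A. val x d i (q i))"
proof -
  let ?X = "{(\<Sum>i\<in>A. val x d i (q i)) | q :: nat \<Rightarrow> nat. sum q A \<le> m}"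
  have "(\<Sum>i\<in>A. val x d i ((\<lambda>_. 0) i)) \<in> ?X" by force
  then have "?X \<noteq> {}" by blast
  then have "Max ?X \<in> ?X" using opt_fin[OF assms] by (intro Max_in) auto
  then show ?thesis unfolding opt_on_def by auto
qed

lemma opt_mono:
  assumes "finite B" "A \<subseteq> B" "\<forall>i\<in>B. 1 \<le> d i"
  shows "opt_on x d m A \<le> opt_on x d m B"
proof -
  have fA: "finite A" using assms finite_subset by blast
  obtain q where q: "sum q A \<le> m" "opt_on x d m A = (\<Sum>i\<in>A. val x d i (q i))"
    using opt_att[OF fA] by blast
  define q' where "q' i = (if i \<in> A then q i else 0)" for i
  have "sum q' B = sum q' A + sum q' (B - A)"
    using assms by (metis add.commute sum.subset_diff)
  also have "\<dots> = sum q A" unfolding q'_def by simp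
  finally have s: "sum q' B \<le> m" using q by simp
  have "(\<Sum>i\<in>B. val x d i (q' i)) = (\<Sum>i\<in>A. val x d i (q' i)) + (\<Sum>i\<in>B-A. val x d i (q' i))"
    using assms by (metis add.commute sum.subset_diff)
  also have "(\<Sum>i\<in>B-A. val x d i (q' i)) = 0"
    using assms(3) by (intro sum.neutral) (auto simp: q'_def val_def)
  also have "(\<Sum>i\<in>A. val x d i (q' i)) = (\<Sum>i\<in>A. val x d i (q i))"
    by (simp add: q'_def)
  finally show ?thesis using q opt_ge[OF assms(1) s, of x d] by simp
qed

lemma seq_nonneg:
  "set L \<subseteq> {..<n} \<Longrightarrow> \<forall>i<n. 0 \<le> x i \<Longrightarrow> 0 \<le> seq_welfare x d ch L r"
proof (induction L arbitrary: r)
  case Nil then show ?case by simp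
next
  case (Cons i L)
  then have "0 \<le> val x d i (ch i r)" by (intro val_ge0) auto
  moreover have "0 \<le> seq_welfare x d ch L (r - ch i r)" using Cons by auto
  ultimately show ?case by simp
qed

lemma seq_bound:
  assumes pc: "preferred_choice x d n p ch" and p0: "0 \<le> p"
    and xd: "\<forall>i<n. 0 \<le> x i \<and> 1 \<le> d i"
    and Bk: "\<forall>i\<in>B. d i \<le> k"
  shows "set L \<subseteq> {..<n} \<Longrightarrow> distinct L \<Longrightarrow>
    min (p * (real r - real k)) (\<Sum>i\<in>set L. if i \<in> B then x i - p * real (d i) else 0)
      \<le> seq_welfare x d ch L r"
proof (induction L arbitrary: r)
  case Nil then show ?case by (simp add: min_def)
next
  case (Cons i L)
  define c where "c i = (if i \<in> B then x i - p * real (d i) else 0)" for i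
  define q where "q = ch i r"
  have iL: "i \<notin> set L" "i < n" using Cons by auto
  have qr: "q \<le> r" and opt: "\<And>q'. q' \<le> r \<Longrightarrow> val x d i q' - p * real q' \<le> val x d i q - p * real q"
    using pc iL unfolding preferred_choice_def q_def by auto
  have "d i \<noteq> 0" using xd iL by force
  then have "val x d i 0 = 0" by (simp add: val_def)
  then have u0: "0 \<le> val x d i q - p * real q" using opt[of 0] by simp
  have IH: "min (p * (real (r - q) - real k)) (\<Sum>i\<in>set L. c i) \<le> seq_welfare x d ch L (r - q)"
    using Cons unfolding c_def by auto
  have sumeq: "(\<Sum>j\<in>set (i # L). c j) = c i + (\<Sum>j\<in>set L. c j)" using iL by simp
  have seqeq: "seq_welfare x d ch (i # L) r = val x d i q + seq_welfare x d ch L (r - q)"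
    by (simp add: q_def)
  have sn: "0 \<le> seq_welfare x d ch (i # L) r" using Cons xd by (intro seq_nonneg) auto
  have rq: "real (r - q) = real r - real q" using qr by simp
  show ?case
  proof (cases "r < k")
    case True
    then have "p * (real r - real k) \<le> 0" using p0 by (simp add: mult_nonneg_nonpos)
    then show ?thesis using sn unfolding c_def[symmetric] by linarith
  next
    case False
    have ci: "c i \<le> val x d i q - p * real q"
    proof (cases "i \<in> B")
      case True
      then have "d i \<le> r" using Bk False by auto
      then have "val x d i (d i) - p * real (d i) \<le> val x d i q - p * real q" using opt by blast
      then show ?thesis using True by (simp add: c_def val_def)
    next
      case False then show ?thesis using u0 by (simp add: c_def)
    qed
    have pq: "0 \<le> p * real q" using p0 by simp
    show ?thesis unfolding c_def[symmetric] sumeq seqeq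
      using IH ci u0 pq rq by (auto simp: min_def algebra_simps split: if_splits)
  qed
qed


definition sg :: "nat \<Rightarrow> nat set \<Rightarrow> real" where
  "sg i S = (if i \<in> S then 1 else -1)"

definition flp :: "nat \<Rightarrow> nat set \<Rightarrow> nat set" where
  "flp i S = (if i \<in> S then S - {i} else insert i S)"

lemma flp_bij: "i \<in> N \<Longrightarrow> bij_betw (flp i) (Pow N) (Pow N)"
  by (rule bij_betw_byWitness[where f'="flp i"]) (auto simp: flp_def)

lemma flip_sum:
  assumes "finite N" "i \<in> N" "\<And>S. h (flp i S) = h S"
  shows "(\<Sum>S\<in>Pow N. sg i S * h S) = 0"
proof -
  have "(\<Sum>S\<in>Pow N. sg i (flp i S) * h (flp i S)) = (\<Sum>S\<in>Pow N. sg i S * h S)"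
    using sum.reindex_bij_betw[OF flp_bij[OF assms(2)], of "\<lambda>S. sg i S * h S"] by simp
  moreover have "(\<Sum>S\<in>Pow N. sg i (flp i S) * h (flp i S)) = - (\<Sum>S\<in>Pow N. sg i S * h S)"
  proof -
    have "\<And>S. sg i (flp i S) * h (flp i S) = - (sg i S * h S)"
      by (simp add: assms(3)) (simp add: sg_def flp_def)
    then show ?thesis by (simp add: sum_negf)
  qed
  ultimately show ?thesis by simp
qed

lemma sum_sg: "finite N \<Longrightarrow> i \<in> N \<Longrightarrow> (\<Sum>S\<in>Pow N. sg i S) = 0"
  using flip_sum[of N i "\<lambda>_. 1"] by simp

lemma sum_sg2: "finite N \<Longrightarrow> i \<in> N \<Longrightarrow>
   (\<Sum>S\<in>Pow N. sg i S * sg j S) = (if i = j then 2 ^ card N else 0)"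
proof (cases "i = j")
  case True
  assume "finite N"
  have "\<And>S. sg i S * sg j S = 1" using True by (simp add: sg_def)
  then have "(\<Sum>S\<in>Pow N. sg i S * sg j S) = (\<Sum>S\<in>Pow N. 1)" by simp
  then show ?thesis using True \<open>finite N\<close> by (simp add: card_Pow)
next
  case False
  assume "finite N" "i \<in> N"
  then show ?thesis using flip_sum[of N i "sg j"] False by (simp add: sg_def flp_def)
qed

lemma sum_Z2:
  assumes "finite N" "W \<subseteq> N"
  shows "(\<Sum>S\<in>Pow N. (\<Sum>i\<in>W. x i * sg i S)^2) = 2 ^ card N * (\<Sum>i\<in>W. (x i)^2)"
proof -
  have fW: "finite W" using assms finite_subset by blast
  have "(\<Sum>S\<in>Pow N. (\<Sum>i\<in>W. x i * sg i S)^2) = (\<Sum>S\<in>Pow N. \<Sum>i\<in>W. \<Sum>j\<in>W. x i * x j * (sg i S * sg j S))"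
    by (simp add: power2_eq_square sum_product algebra_simps)
  also have "\<dots> = (\<Sum>i\<in>W. \<Sum>j\<in>W. \<Sum>S\<in>Pow N. x i * x j * (sg i S * sg j S))"
    by (subst sum.swap) (simp add: sum.swap[of _ "Pow N"])
  also have "\<dots> = (\<Sum>i\<in>W. \<Sum>j\<in>W. x i * x j * (if i = j then 2 ^ card N else 0))"
    using assms by (intro sum.cong refl) (auto simp: sum_distrib_left[symmetric] sum_sg2)
  also have "\<dots> = (\<Sum>i\<in>W. x i * x i * 2 ^ card N)"
    by (intro sum.cong refl) (simp add: if_distrib fW cong: if_cong)
  finally show ?thesis by (simp add: power2_eq_square sum_distrib_left algebra_simps)
qed

lemma sum_Z:
  assumes "finite N" "W \<subseteq> N"
  shows "(\<Sum>S\<in>Pow N. (\<Sum>i\<in>W. x i * sg i S)) = 0"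
proof -
  have "(\<Sum>S\<in>Pow N. (\<Sum>i\<in>W. x i * sg i S)) = (\<Sum>i\<in>W. x i * (\<Sum>S\<in>Pow N. sg i S))"
    by (subst sum.swap) (simp add: sum_distrib_left)
  also have "\<dots> = 0" using assms by (intro sum.neutral) (auto simp: sum_sg)
  finally show ?thesis .
qed


theorem lemma3p5:
  fixes n m :: nat and x :: "nat \<Rightarrow> real" and d :: "nat \<Rightarrow> nat"
    and ord :: "nat set \<Rightarrow> nat list" and ch :: "nat set \<Rightarrow> nat \<Rightarrow> nat \<Rightarrow> nat"
  assumes "m \<ge> 1"
    and "\<forall>i<n. 0 \<le> x i \<and> 1 \<le> d i \<and> d i \<le> m"
    and "\<forall>S \<subseteq> {..<n}. distinct (ord S) \<and> set (ord S) = {..<n} - S"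
    and "\<forall>S \<subseteq> {..<n}. preferred_choice x d n (price x d m S) (ch S)"
  shows "opt_on x d m {..<n} / 400 \<le> expected_welfare x d m n ord ch"
proof -
  let ?N = "{..<n}"
  define P where "P = opt_on x d m ?N"
  have xd: "\<forall>i<n. 0 \<le> x i \<and> 1 \<le> d i" using assms(2) by auto
  define E where "E = (\<Sum>S\<in>Pow ?N. (1/2)^n * seq_welfare x d (ch S) (ord S) m)"
  define G where "G = grand_bundle_welfare x d m n"
  have exp: "expected_welfare x d m n ord ch = 1/2 * G + 1/2 * E"
    by (simp add: expected_welfare_def E_def G_def)
  have gfin: "finite (insert 0 ((\<lambda>i. val x d i m) ` ?N))" by simp
  have G0: "0 \<le> G" unfolding G_def grand_bundle_welfare_def using gfin by (intro Max_ge) auto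
  have Gx: "x i \<le> G" if "i < n" for i
  proof -
    have "val x d i m = x i" using assms(2) that by (simp add: val_def)
    then show ?thesis unfolding G_def grand_bundle_welfare_def using gfin that
      by (metis Max_ge imageI insertI2 lessThan_iff)
  qed
  have E0: "0 \<le> E" unfolding E_def
    using assms(3) xd by (intro sum_nonneg mult_nonneg_nonneg seq_nonneg) auto
  show ?thesis
  proof (cases "P \<le> 0")
    case True
    then show ?thesis using E0 G0 exp unfolding P_def by simp
  next
    case False
    then have P0: "0 < P" by simp
    show ?thesis
    proof (cases "\<exists>i<n. P/200 \<le> x i")
      case True
      then obtain i where "i < n" "P/200 \<le> x i" by blast
      then have "P/200 \<le> G" using Gx by force
      then show ?thesis using E0 exp unfolding P_def by simp
    next
      case False
      then have xs: "\<forall>i<n. x i < P/200" by auto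
      obtain q where q: "sum q ?N \<le> m" "P = (\<Sum>i\<in>?N. val x d i (q i))"
        using opt_att[where A="?N" and x=x and d=d and m=m] unfolding P_def by auto
      define W where "W = {i\<in>?N. d i \<le> q i}"
      have fW: "finite W" and WN: "W \<subseteq> ?N" unfolding W_def by auto
      have PW: "P = sum x W" unfolding q(2) W_def
        using sum.inter_filter[of ?N x "\<lambda>i. d i \<le> q i"] by (simp add: val_def)
      have "sum d W \<le> sum q W" by (intro sum_mono) (auto simp: W_def)
      also have "\<dots> \<le> sum q ?N" using WN by (intro sum_mono2) auto
      finally have dW: "sum d W \<le> m" using q(1) by linarith
      define k where "k = m div 2"
      define W' where "W' = {i\<in>W. d i \<le> k}"
      define V where "V = sum x W'"
      have W'W: "W' \<subseteq> W" unfolding W'_def by auto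
      have fW': "finite W'" using fW W'W finite_subset by blast
      have W'N: "W' \<subseteq> ?N" using W'W WN by auto
      have one: "i = j" if "i \<in> W - W'" "j \<in> W - W'" for i j
      proof (rule ccontr)
        assume "i \<noteq> j"
        then have "sum d {i, j} = d i + d j" by simp
        moreover have "sum d {i, j} \<le> sum d W" using that fW by (intro sum_mono2) auto
        moreover have "d i > k" "d j > k" using that unfolding W'_def by auto
        ultimately show False using dW unfolding k_def by linarith
      qed
      have rest: "sum x (W - W') \<le> P/200"
      proof (cases "W - W' = {}")
        case True then show ?thesis using P0 by (simp only: sum.empty)
      next
        case False
        then obtain i where i: "i \<in> W - W'" by blast
        then have "W - W' = {i}" using one by blast
        then show ?thesis using xs i WN by force
      qed
      have PV: "P = V + sum x (W - W')"
        unfolding PW V_def using sum.subset_diff[OF W'W fW, of x] by simp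
      have V199: "V \<ge> 199/200 * P" using PV rest by simp
      define Q where "Q = (\<Sum>i\<in>W'. (x i)^2)"
      have "Q \<le> (\<Sum>i\<in>W'. P/200 * x i)" unfolding Q_def
      proof (intro sum_mono)
        fix i assume "i \<in> W'"
        then have "0 \<le> x i" "x i \<le> P/200" using W'N xd xs by force+
        then show "(x i)^2 \<le> P/200 * x i" using mult_right_mono[of "x i" "P/200" "x i"] by (simp add: power2_eq_square)
      qed
      then have QV: "Q \<le> P/200 * V" unfolding V_def by (simp add: sum_distrib_left)
      define Z where "Z S = (\<Sum>i\<in>W'. x i * sg i S)" for S
      define T where "T S = sum x (W' \<inter> S)" for S
      have TZ: "T S = (V + Z S) / 2" for S
      proof -
        have "T S = (\<Sum>i\<in>W'. if i \<in> S then x i else 0)"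
          unfolding T_def using sum.inter_restrict[OF fW', of x S] by simp
        also have "\<dots> = (\<Sum>i\<in>W'. (x i + x i * sg i S) / 2)"
          by (intro sum.cong refl) (simp add: sg_def)
        also have "\<dots> = (V + Z S) / 2"
          unfolding V_def Z_def by (simp add: sum_divide_distrib[symmetric] sum.distrib)
        finally show ?thesis .
      qed
      have key: "T S / 20 - (T S - V/2)^2 / P \<le> seq_welfare x d (ch S) (ord S) m"
        if SN: "S \<subseteq> ?N" for S
      proof -
        define Os where "Os = opt_on x d m S"
        define p where "p = price x d m S"
        have pO: "p = Os / (10 * real m)" unfolding p_def Os_def price_def by simp
        have fS: "finite S" using SN finite_subset by blast
        define q' where "q' i = (if i \<in> W' \<inter> S then q i else 0)" for i
        have "sum q' S \<le> sum q S" by (intro sum_mono) (auto simp: q'_def)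
        also have "\<dots> \<le> sum q ?N" using SN by (intro sum_mono2) auto
        finally have sq': "sum q' S \<le> m" using q(1) by linarith
        have "(\<Sum>i\<in>S. val x d i (q' i)) = (\<Sum>i\<in>S. if i \<in> W' then x i else 0)"
        proof (intro sum.cong refl)
          fix i assume "i \<in> S"
          then have "1 \<le> d i" using SN xd by auto
          then show "val x d i (q' i) = (if i \<in> W' then x i else 0)"
            using \<open>i \<in> S\<close> by (auto simp: q'_def val_def W'_def W_def)
        qed
        also have "\<dots> = T S"
          unfolding T_def using sum.inter_restrict[OF fS, of x W'] by (simp add: Int_commute)
        finally have TO: "T S \<le> Os" unfolding Os_def using opt_ge[OF fS sq', of x d] by simp
        have OP: "Os \<le> P" unfolding Os_def P_def using SN xd by (intro opt_mono) auto
        have T0: "0 \<le> T S" unfolding T_def using W'N xd by (intro sum_nonneg) auto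
        have m0: "real m > 0" using assms(1) by simp
        have p0: "0 \<le> p" using pO TO T0 m0 by simp
        have dist: "distinct (ord S)" and setS: "set (ord S) = ?N - S" using assms(3) SN by auto
        have pc: "preferred_choice x d n p (ch S)" using assms(4) SN p_def by auto
        have Bk: "\<forall>i\<in>W'. d i \<le> k" unfolding W'_def by auto
        define c where "c i = (if i \<in> W' then x i - p * real (d i) else 0)" for i
        have sb: "min (p * (real m - real k)) (\<Sum>i\<in>?N - S. c i) \<le> seq_welfare x d (ch S) (ord S) m"
          using seq_bound[OF pc p0 xd Bk, of "ord S" m] dist setS unfolding c_def by auto
        have "(\<Sum>i\<in>?N - S. c i) = (\<Sum>i\<in>(?N - S) \<inter> W'. x i - p * real (d i))"
          unfolding c_def by (subst sum.inter_restrict) auto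
        also have "(?N - S) \<inter> W' = W' - S" using W'N by auto
        finally have sc: "(\<Sum>i\<in>?N - S. c i) = sum x (W' - S) - p * real (sum d (W' - S))"
          by (simp add: sum_subtractf sum_distrib_left)
        have "sum d (W' - S) \<le> sum d W" using W'W fW by (intro sum_mono2) auto
        then have dm: "real (sum d (W' - S)) \<le> real m" using dW by linarith
        have xWS: "sum x (W' - S) = V - T S"
          unfolding V_def T_def using sum.Int_Diff[OF fW', of x S] by simp
        have pm: "p * real m = Os / 10" using pO m0 by simp
        have "p * real (sum d (W' - S)) \<le> p * real m" using dm p0 by (intro mult_left_mono)
        then have c2: "(\<Sum>i\<in>?N - S. c i) \<ge> V - T S - P/10" using sc xWS pm OP by linarith
        have "real m - real k \<ge> real m / 2" unfolding k_def by linarith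
        then have "p * (real m - real k) \<ge> p * (real m / 2)" using p0 by (intro mult_left_mono)
        then have c1: "p * (real m - real k) \<ge> T S / 20" using pm TO by simp
        have s1: "min (T S / 20) (V - T S - P/10) \<le> seq_welfare x d (ch S) (ord S) m"
          using sb c1 c2 by linarith
        define t where "t = T S"
        have sqp: "0 \<le> (t - V/2 - 21*P/40)^2" by simp
        have PVm: "P * V \<ge> P * (199/200 * P)" using V199 P0 by (intro mult_left_mono) auto
        have h: "P * t / 20 - (t - V/2)^2 \<le> P * (V - t - P/10)"
        proof -
          have b0: "0 \<le> P * P" by simp
          have e1: "(t - V/2 - 21*P/40)^2 = t*t - t*V + V*V/4 - 21/20*(P*t) + 21/40*(P*V) + 441/1600*(P*P)"
            by (simp add: power2_eq_square algebra_simps)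
          have e2: "P * t / 20 - (t - V/2)^2 = 1/20*(P*t) - t*t + t*V - V*V/4"
            by (simp add: power2_eq_square algebra_simps)
          have e3: "P * (V - t - P/10) = P*V - P*t - 1/10*(P*P)"
            by (simp add: algebra_simps)
          have e4: "P * (199/200 * P) = 199/200*(P*P)" by simp
          show ?thesis unfolding e2 e3 using sqp PVm b0 e1 e4 by linarith
        qed
        have h2: "t / 20 - (t - V/2)^2 / P \<le> V - t - P/10"
        proof -
          have "t / 20 - (t - V/2)^2 / P = (P * t / 20 - (t - V/2)^2) / P" using P0 by (simp add: field_simps)
          also have "\<dots> \<le> P * (V - t - P/10) / P" using h P0 by (intro divide_right_mono) auto
          finally show ?thesis using P0 by simp
        qed
        have h1: "t / 20 - (t - V/2)^2 / P \<le> t / 20" using P0 by simp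
        show ?thesis using s1 h1 h2 unfolding t_def by linarith
      qed
      have "E \<ge> (\<Sum>S\<in>Pow ?N. (1/2)^n * (T S / 20 - (T S - V/2)^2 / P))"
        unfolding E_def using key by (intro sum_mono mult_left_mono) auto
      also have "(\<Sum>S\<in>Pow ?N. (1/2)^n * (T S / 20 - (T S - V/2)^2 / P))
          = (1/2)^n * ((\<Sum>S\<in>Pow ?N. V/40) + (\<Sum>S\<in>Pow ?N. Z S) / 40 - (\<Sum>S\<in>Pow ?N. (Z S)^2) / (4*P))"
      proof -
        have pw: "T S / 20 - (T S - V/2)^2 / P = V/40 + Z S/40 - (Z S)^2/(4*P)" for S
          unfolding TZ using P0 by (simp add: field_simps power2_eq_square)
        have "(\<Sum>S\<in>Pow ?N. V/40 + Z S/40 - (Z S)^2/(4*P))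
           = (\<Sum>S\<in>Pow ?N. V/40) + (\<Sum>S\<in>Pow ?N. Z S) / 40 - (\<Sum>S\<in>Pow ?N. (Z S)^2) / (4*P)"
          by (simp add: sum_subtractf sum.distrib sum_divide_distrib)
        then show ?thesis unfolding pw by (simp add: sum_distrib_left[symmetric])
      qed
      also have "\<dots> = (1/2)^n * (2^n * (V/40) - 2^n * Q / (4 * P))"
        using sum_Z[of ?N W' x] sum_Z2[of ?N W' x] W'N unfolding Z_def Q_def by (simp add: card_Pow)
      also have "\<dots> = V/40 - Q / (4*P)"
        by (simp add: field_simps power_divide)
      finally have E1: "V/40 - Q/(4*P) \<le> E" .
      have "Q / (4*P) \<le> (P/200 * V) / (4*P)" using QV P0 by (intro divide_right_mono) auto
      also have "\<dots> = V / 800" using P0 by simp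
      finally have "19 * V / 800 \<le> E" using E1 by linarith
      then have "P / 200 \<le> E" using V199 P0 by linarith
      then show ?thesis using exp G0 unfolding P_def by linarith
    qed
  qed
qed

end
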